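(* For an integer $k\ge1$ let $F_0(k)=0$, $F_1(k)=1$, $F_n(k)=kF_{n-1}(k)+F_{n-2}(k)$ for $n\ge2$, and for $n\ge2$ let $I_{k,n}(t)=\#(t\mathcal{T}\cap\mathbb{Z}^2)$ where $\mathcal{T}$ is the triangle with vertices $(0,0)$, $\left(\frac{F_{n-1}(k)}{F_n(k)},0\right)$ and $\left(0,\frac{F_n(k)}{F_{n-1}(k)}\right)$. Then for every $k\ge1$ and every even integer $n\ge2$, $F_n(k)$ is a common quasi-period of $I_{k,n}(t)$ and $I_{k,n+1}(t)$.
   Context: The Ehrhart function of a rational polygon is a quasipolynomial $\sum_i c_i(t)t^i$ with periodic coefficient functions $c_i$; an integer $N$ is a quasi-period if every $c_i$ is periodic with period $N$. *)

theory Defs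
  imports "HOL-Analysis.Analysis"
begin

fun F :: "nat \<Rightarrow> nat \<Rightarrow> nat" where
  "F k 0 = 0"
| "F k (Suc 0) = 1"
| "F k (Suc (Suc n)) = k * F k (Suc n) + F k n"

definition triangle :: "nat \<Rightarrow> nat \<Rightarrow> (real \<times> real) set" where
  "triangle k n = convex hull {(0, 0), (real (F k (n - 1)) / real (F k n), 0),
                               (0, real (F k n) / real (F k (n - 1)))}"

definition I :: "nat \<Rightarrow> nat \<Rightarrow> nat \<Rightarrow> nat" where
  "I k n t = card {p :: int \<times> int.
       (real_of_int (fst p), real_of_int (snd p)) \<in> (\<lambda>x. real t *\<^sub>R x) ` triangle k n}"

definition quasi_period :: "nat \<Rightarrow> (nat \<Rightarrow> real) \<Rightarrow> bool" where
  "quasi_period N f \<longleftrightarrow>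
     (\<exists>(d::nat) (c :: nat \<Rightarrow> nat \<Rightarrow> real).
        (\<forall>i t. c i (t + N) = c i t) \<and>
        (\<forall>t. f t = (\<Sum>i\<le>d. c i t * real t ^ i)))"

end

theory Submission
  imports Defs
begin


lemma F_pos: "k \<ge> 1 \<Longrightarrow> j \<ge> 1 \<Longrightarrow> F k j > 0"
proof (induction k j rule: F.induct)
  case (3 k n)
  then show ?case by (cases n) auto
qed auto

lemma F_cassini: "int (F k (Suc (Suc j))) * int (F k j) - int (F k (Suc j))^2 = (-1)^(Suc j)"
proof (induction j)
  case 0 then show ?case by simp
next
  case (Suc j)
  have "int (F k (Suc (Suc (Suc j)))) * int (F k (Suc j)) - int (F k (Suc (Suc j)))^2
      = - (int (F k (Suc (Suc j))) * int (F k j) - int (F k (Suc j))^2)"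
    by (simp add: algebra_simps power2_eq_square)
  then show ?case using Suc by simp
qed

lemma F_coprime: "coprime (F k j) (F k (Suc j))"
proof (induction j)
  case 0 then show ?case by simp
next
  case (Suc j)
  have "coprime (F k (Suc j)) (F k j)" using Suc by (simp add: ac_simps)
  moreover have "gcd (F k (Suc j)) (F k (Suc (Suc j))) = gcd (F k (Suc j)) (F k j)"
    by (simp add: gcd_add_mult)
  ultimately show ?case by (simp add: coprime_iff_gcd_eq_1)
qed

lemma F_odd_mod: "F k (2*i+1) mod k = 1 mod k"
proof (induction i)
  case 0 then show ?case by simp
next
  case (Suc i)
  have "F k (2*Suc i+1) = k * F k (2*i+2) + F k (2*i+1)"
    by (simp add: numeral_2_eq_2)
  then show ?case using Suc by simp
qed

lemma F_coprime2:
  assumes "even n" "n \<ge> 2"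
  shows "coprime (F k (n-1)) (F k (n+1))"
proof -
  obtain j where j: "n = 2*j" using assms by (auto elim: evenE)
  define i where "i = j - 1"
  have n: "n = 2*i+2" using j assms unfolding i_def by simp
  have q: "coprime (F k (2*i+1)) k"
  proof (cases "k = 0")
    case True then show ?thesis using F_odd_mod[of 0 i] by simp
  next
    case False
    have "coprime (1 mod k) k" by (simp add: coprime_mod_left_iff False)
    then have "coprime (F k (2*i+1) mod k) k" using F_odd_mod by simp
    then show ?thesis using coprime_mod_left_iff False by blast
  qed
  have c2: "coprime (F k (2*i+1)) (F k (2*i+2))" using F_coprime[of k "2*i+1"] by simp
  have "coprime (F k (2*i+1)) (k * F k (2*i+2))" using q c2 by simp
  then have "coprime (F k (2*i+1)) (k * F k (2*i+2) + F k (2*i+1))"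
    using gcd_add2[of "F k (2*i+1)" "k * F k (2*i+2)"] by (simp add: coprime_iff_gcd_eq_1 add.commute)
  moreover have "F k (2*i+3) = k * F k (2*i+2) + F k (2*i+1)" by (simp add: numeral_3_eq_3 numeral_2_eq_2)
  ultimately show ?thesis using n by (simp add: numeral_3_eq_3)
qed



definition A :: "int \<Rightarrow> int \<Rightarrow> int \<Rightarrow> (int \<times> int) set" where
  "A a b t = {(x,y). 0 \<le> x \<and> 0 \<le> y \<and> a^2*x + b^2*y \<le> t*a*b}"

lemma A_finite:
  assumes "a > 0" "b > 0"
  shows "finite (A a b t)"
proof -
  have "A a b t \<subseteq> {0..t*a*b} \<times> {0..t*a*b}"
  proof
    fix p assume "p \<in> A a b t"
    then obtain x y where p: "p = (x,y)" "0 \<le> x" "0 \<le> y" "a^2*x + b^2*y \<le> t*a*b"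
      unfolding A_def by auto
    have a1: "a^2 \<ge> 1" "b^2 \<ge> 1" using one_le_power[of a 2] one_le_power[of b 2] assms by auto
    have "1*x \<le> a^2*x" using mult_right_mono[OF a1(1) p(2)] .
    moreover have "1*y \<le> b^2*y" using mult_right_mono[OF a1(2) p(3)] .
    moreover have "0 \<le> a^2*x" "0 \<le> b^2*y" using p by simp_all
    ultimately show "p \<in> {0..t*a*b} \<times> {0..t*a*b}" using p by auto
  qed
  then show ?thesis by (rule finite_subset) auto
qed

lemma A_mono:
  assumes "a > 0" "b > 0" "t \<le> s"
  shows "A a b t \<subseteq> A a b s"
proof -
  have "t*a*b \<le> s*a*b" using assms by (simp add: mult_right_mono)
  then show ?thesis unfolding A_def by auto
qed

definition E :: "int \<Rightarrow> int \<Rightarrow> int \<Rightarrow> (int \<times> int) set" where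
  "E a b t = {(x,y). 0 \<le> x \<and> x < b \<and> (t+a)*a*b < a^2*x + b^2*y \<and> a^2*x + b^2*y \<le> (t+2*a)*a*b}"

lemma card_E:
  assumes "a > 0" "b > 0" "m > 0" "m*b = a^2+1" "coprime m b"
  shows "card (E a b t) = nat (a^2)"
proof -
  let ?W = "{(t+a)*a<..(t+2*a)*a}"
  let ?f = "\<lambda>(x::int,y::int). m*x + b*y"
  have key: "a^2*x + b^2*y = b*(m*x+b*y) - x" for x y
  proof -
    have a2: "a^2 = m*b - 1" using assms(4) by linarith
    show ?thesis unfolding a2 by (simp add: algebra_simps power2_eq_square)
  qed
  have inj: "inj_on ?f (E a b t)"
  proof (rule inj_onI)
    fix p p' assume p: "p \<in> E a b t" and p': "p' \<in> E a b t" and eq: "?f p = ?f p'"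
    obtain x y where xy: "p = (x,y)" "0 \<le> x" "x < b" using p unfolding E_def by auto
    obtain x' y' where xy': "p' = (x',y')" "0 \<le> x'" "x' < b" using p' unfolding E_def by auto
    have e: "m*(x - x') = b*(y' - y)" using eq xy xy' by (simp add: algebra_simps)
    have "b dvd m*(x-x')" using e by simp
    then have "b dvd (x - x')" using assms(5) by (simp add: coprime_dvd_mult_right_iff coprime_commute)
    then obtain c where c: "x - x' = b*c" by (auto elim: dvdE)
    have "c = 0"
    proof (rule ccontr)
      assume "c \<noteq> 0"
      then have c1: "\<bar>c\<bar> \<ge> 1" by linarith
      have "b*1 \<le> b*\<bar>c\<bar>" using c1 assms(2) by (intro mult_left_mono) auto
      then have "\<bar>b*c\<bar> \<ge> b" using assms(2) by (simp add: abs_mult)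
      then show False using c xy xy' by linarith
    qed
    then have "x = x'" using c by simp
    then have "b*y = b*y'" using e by (simp add: algebra_simps)
    then have "y = y'" using assms(2) by simp
    then show "p = p'" using xy xy' \<open>x = x'\<close> by simp
  qed
  have img: "?f ` (E a b t) = ?W"
  proof
    show "?f ` (E a b t) \<subseteq> ?W"
    proof
      fix w assume "w \<in> ?f ` (E a b t)"
      then obtain x y where xy: "(x,y) \<in> E a b t" "w = m*x+b*y" by auto
      have h: "0 \<le> x" "x < b" "(t+a)*a*b < b*w - x" "b*w - x \<le> (t+2*a)*a*b"
        using xy key[of x y] unfolding E_def by auto
      have "b*((t+a)*a) < b*w" using h by (simp add: algebra_simps)
      then have l: "(t+a)*a < w" using assms(2) by simp
      have "b*w < b*((t+2*a)*a + 1)" using h by (simp add: algebra_simps)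
      then have "w < (t+2*a)*a + 1" using assms(2) by simp
      then show "w \<in> ?W" using l by simp
    qed
  next
    show "?W \<subseteq> ?f ` (E a b t)"
    proof
      fix w assume w: "w \<in> ?W"
      obtain u v1 where uv: "u*m + v1*b = gcd m b" using bezout_int by blast
      then have uv1: "u*m + v1*b = 1" using assms(5) by simp
      define x where "x = (w*u) mod b"
      have x: "0 \<le> x" "x < b" unfolding x_def using assms(2) by simp_all
      have "b dvd (w*u - x)" unfolding x_def by (simp add: mod_0_imp_dvd minus_mod_eq_mult_div [symmetric])
      then obtain c where c: "w*u - x = b*c" by (auto elim: dvdE)
      have "w - m*x = w*(u*m + v1*b) - m*x" using uv1 by simp
      also have "\<dots> = m*(w*u - x) + b*(w* v1)" by (simp add: algebra_simps)
      also have "\<dots> = b*(m*c + w* v1)" using c by (simp add: algebra_simps)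
      finally have yy: "w = m*x + b*(m*c+w* v1)" by simp
      define y where "y = m*c+w* v1"
      have wy: "w = m*x + b*y" using yy y_def by simp
      have w1: "(t+a)*a + 1 \<le> w" "w \<le> (t+2*a)*a" using w by auto
      have "b*((t+a)*a + 1) \<le> b*w" using w1 assms(2) by simp
      then have v1: "(t+a)*a*b < b*w - x" using x by (simp add: algebra_simps)
      have "b*w \<le> b*((t+2*a)*a)" using w1 assms(2) by simp
      then have v2: "b*w - x \<le> (t+2*a)*a*b" using x by (simp add: algebra_simps)
      have "(x,y) \<in> E a b t" unfolding E_def using x v1 v2 key[of x y] wy by auto
      then show "w \<in> ?f ` (E a b t)" using wy by force
    qed
  qed
  have "card (E a b t) = card ?W" using inj img card_image by fastforce
  also have "\<dots> = nat (a^2)" by (simp add: algebra_simps power2_eq_square)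
  finally show ?thesis .
qed

lemma split_S:
  assumes "a > 0" "b > 0" "t \<ge> 0"
  shows "A a b (t+2*a) - A a b (t+a) = (\<lambda>(x,y). (x+b,y)) ` (A a b (t+a) - A a b t) \<union> E a b t"
proof (intro equalityI subsetI)
  fix p assume p: "p \<in> A a b (t+2*a) - A a b (t+a)"
  obtain x y where xy: "p = (x,y)" by force
  have h: "0 \<le> x" "0 \<le> y" "a^2*x + b^2*y \<le> (t+2*a)*a*b" "\<not> a^2*x + b^2*y \<le> (t+a)*a*b"
    using p xy unfolding A_def by auto
  show "p \<in> (\<lambda>(x,y). (x+b,y)) ` (A a b (t+a) - A a b t) \<union> E a b t"
  proof (cases "x < b")
    case True
    then show ?thesis using h xy unfolding E_def by auto
  next
    case False
    have e: "a^2*(x-b) + b^2*y = a^2*x + b^2*y - a*a*b" by (simp add: algebra_simps power2_eq_square)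
    have r1: "(t+2*a)*a*b = (t+a)*a*b + a*a*b" "(t+a)*a*b = t*a*b + a*a*b" by (simp_all add: algebra_simps)
    have g1: "0 \<le> x - b" using False by simp
    have g2: "a^2*(x-b) + b^2*y \<le> (t+a)*a*b" using h e r1 by linarith
    have g3: "\<not> a^2*(x-b) + b^2*y \<le> t*a*b" using h e r1 by linarith
    have "(x-b, y) \<in> A a b (t+a) - A a b t"
      using g1 g2 g3 h unfolding A_def by auto
    moreover have "p = (\<lambda>(x,y). (x+b,y)) (x-b,y)" using xy by simp
    ultimately show ?thesis by blast
  qed
next
  fix p assume p: "p \<in> (\<lambda>(x,y). (x+b,y)) ` (A a b (t+a) - A a b t) \<union> E a b t"
  show "p \<in> A a b (t+2*a) - A a b (t+a)"
  proof (cases "p \<in> E a b t")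
    case True
    then obtain x y where xy: "p = (x,y)" "0 \<le> x" "x < b" "(t+a)*a*b < a^2*x + b^2*y" "a^2*x + b^2*y \<le> (t+2*a)*a*b"
      unfolding E_def by auto
    have "a^2*x < a^2*b" using xy assms by simp
    moreover have "a^2*b \<le> (t+a)*a*b" using assms by (simp add: algebra_simps power2_eq_square mult_nonneg_nonneg)
    ultimately have "0 < b^2*y" using xy by linarith
    then have "0 < y" using assms by (simp add: zero_less_mult_iff)
    then show ?thesis using xy unfolding A_def by auto
  next
    case False
    then obtain x y where xy: "p = (x+b,y)" "(x,y) \<in> A a b (t+a) - A a b t" using p by auto
    have e: "a^2*(x+b) + b^2*y = a^2*x + b^2*y + a*a*b" by (simp add: algebra_simps power2_eq_square)
    have r1: "(t+2*a)*a*b = (t+a)*a*b + a*a*b" "(t+a)*a*b = t*a*b + a*a*b" by (simp_all add: algebra_simps)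
    have h: "0 \<le> x" "0 \<le> y" "a^2*x + b^2*y \<le> (t+a)*a*b" "\<not> a^2*x + b^2*y \<le> t*a*b"
      using xy unfolding A_def by auto
    have g2: "a^2*(x+b) + b^2*y \<le> (t+2*a)*a*b" using h e r1 by linarith
    have h4: "t*a*b < a^2*x + b^2*y" using h(4) by simp
    have g3: "(t+a)*a*b < a^2*(x+b) + b^2*y" using h4 e r1(2) by linarith
    show ?thesis using xy h g2 g3 assms unfolding A_def by auto
  qed
qed

lemma D2:
  assumes "a > 0" "b > 0" "m > 0" "m*b = a^2+1" "coprime m b" "t \<ge> 0"
  shows "int (card (A a b (t+2*a))) - 2 * int (card (A a b (t+a))) + int (card (A a b t)) = a^2"
proof -
  define P0 where "P0 = A a b t"
  define P1 where "P1 = A a b (t+a)"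
  define P2 where "P2 = A a b (t+2*a)"
  have fin: "finite P0" "finite P1" "finite P2" unfolding P0_def P1_def P2_def using A_finite assms by blast+
  have s01: "P0 \<subseteq> P1" unfolding P0_def P1_def using A_mono assms by simp
  have s12: "P1 \<subseteq> P2" unfolding P2_def P1_def using A_mono assms by simp
  have inj: "inj_on (\<lambda>(x::int,y::int). (x+b,y)) X" for X by (auto intro: inj_onI)
  have disj: "(\<lambda>(x,y). (x+b,y)) ` (A a b (t+a) - A a b t) \<inter> E a b t = {}"
    unfolding E_def A_def using assms by auto
  have sp: "P2 - P1 = (\<lambda>(x,y). (x+b,y)) ` (P1 - P0) \<union> E a b t"
    unfolding P0_def P1_def P2_def using split_S[OF assms(1,2,6)] .
  have finE: "finite (E a b t)" using sp fin by (metis finite_Diff finite_Un)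
  have "card (P2 - P1) = card (P1 - P0) + card (E a b t)"
    unfolding sp
    by (subst card_Un_disjoint) (use disj fin finE in \<open>auto simp: card_image[OF inj] P0_def P1_def\<close>)
  then have "card P2 - card P1 = card P1 - card P0 + nat (a^2)"
    using card_Diff_subset[OF fin(1) s01] card_Diff_subset[OF fin(2) s12] card_E[OF assms(1-5)] by simp
  moreover have "card P0 \<le> card P1" "card P1 \<le> card P2" using card_mono fin s01 s12 by blast+
  moreover have "int (nat (a^2)) = a^2" by simp
  ultimately have "int (card P2) - int (card P1) = int (card P1) - int (card P0) + a^2"
    by (metis add_diff_cancel_right' diff_add_cancel le_add_diff_inverse2 of_nat_add of_nat_diff)
  then show ?thesis unfolding P0_def[symmetric] P1_def[symmetric] P2_def[symmetric] by simp
qed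



lemma aux_alg:
  fixes X Y Z C g h u :: real
  assumes "Z = 2*Y - X + C" "X = g + u*(h-g) + C*u*(u-1)/2" "Y = g + (u+1)*(h-g) + C*(u+1)*u/2"
  shows "Z = g + (u+2)*(h-g) + C*(u+2)*(u+1)/2"
  using assms by (simp add: field_simps)

lemma quad_form:
  fixes f :: "nat \<Rightarrow> real" and N :: nat
  assumes D: "\<And>t. f (t+2*N) - 2 * f (t+N) + f t = C"
  shows "f (r + s*N) = f r + real s * (f (r+N) - f r) + C * real s * (real s - 1) / 2"
proof -
  have "f (r + s*N) = f r + real s * (f (r+N) - f r) + C * real s * (real s - 1) / 2 \<and>
        f (r + Suc s*N) = f r + real (Suc s) * (f (r+N) - f r) + C * real (Suc s) * (real (Suc s) - 1) / 2"
  proof (induction s)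
    case 0 then show ?case by simp
  next
    case (Suc s)
    have "f (r + s*N + 2*N) - 2 * f (r + s*N + N) + f (r + s*N) = C" by (rule D)
    moreover have "r + s*N + 2*N = r + Suc (Suc s) * N" "r + s*N + N = r + Suc s * N" by (simp_all add: algebra_simps)
    ultimately have "f (r + Suc (Suc s) * N) = 2 * f (r + Suc s * N) - f (r + s*N) + C" by simp
    moreover have "f (r + Suc s * N) = f r + (real s + 1) * (f (r+N) - f r) + C * (real s + 1) * real s / 2"
      using Suc by (simp add: add.commute)
    ultimately have "f (r + Suc (Suc s) * N) = f r + (real s + 2) * (f (r+N) - f r) + C * (real s + 2) * (real s + 1) / 2"
      using Suc aux_alg by blast
    then show ?case using Suc by (simp add: add.commute)
  qed
  then show ?thesis by blast
qed

lemma qp_from_D2: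
  fixes f :: "nat \<Rightarrow> real" and N :: nat
  assumes N: "N > 0" and D: "\<And>t. f (t+2*N) - 2 * f (t+N) + f t = C"
  shows "quasi_period N f"
proof -
  define c :: "nat \<Rightarrow> nat \<Rightarrow> real" where
    "c i t = (let r = real (t mod N); \<Delta> = f (t mod N + N) - f (t mod N) in
       if i = 0 then f (t mod N) - \<Delta> * r / N + C * r * (r + N) / (2 * N^2)
       else if i = 1 then \<Delta> / N - C * (2*r + N) / (2 * N^2)
       else C / (2 * N^2))" for i t
  have per: "c i (t + N) = c i t" for i t unfolding c_def by (simp only: mod_add_self2)
  have rep: "f t = (\<Sum>i\<le>2. c i t * real t ^ i)" for t
  proof -
    define r where "r = t mod N"
    define s where "s = t div N"
    have t: "t = r + s*N" unfolding r_def s_def by simp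
    have tr: "real t = real r + real s * real N" using t by simp
    have "f t = f r + real s * (f (r+N) - f r) + C * real s * (real s - 1) / 2"
      using quad_form[of f N C r s, OF D] t by simp
    moreover have "(\<Sum>i\<le>2. c i t * real t ^ i) = c 0 t + c 1 t * real t + c 2 t * real t ^ 2"
      by (simp add: numeral_2_eq_2)
    moreover have "c 0 t + c 1 t * real t + c 2 t * real t ^ 2 =
       f r + real s * (f (r+N) - f r) + C * real s * (real s - 1) / 2"
      unfolding c_def Let_def r_def[symmetric] tr using N
      by (simp add: field_simps power2_eq_square)
    ultimately show ?thesis by simp
  qed
  show ?thesis unfolding quasi_period_def using per rep by blast
qed



lemma tri_mem:
  fixes c d t :: nat and i j :: int
  assumes c: "c > 0" and d: "d > 0"
  shows "((real_of_int i, real_of_int j) \<in> (\<lambda>x. real t *\<^sub>R x) ` (convex hull {(0,0), (real c / real d, 0), (0, real d / real c)}))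
     \<longleftrightarrow> (0 \<le> i \<and> 0 \<le> j \<and> (int d)^2 * i + (int c)^2 * j \<le> int t * int d * int c)"
proof
  assume "(real_of_int i, real_of_int j) \<in> (\<lambda>x. real t *\<^sub>R x) ` (convex hull {(0,0), (real c / real d, 0), (0, real d / real c)})"
  then obtain u v w where uvw: "0 \<le> u" "0 \<le> v" "0 \<le> w" "u + v + w = 1"
    "(real_of_int i, real_of_int j) = real t *\<^sub>R (u *\<^sub>R (0,0) + v *\<^sub>R (real c / real d, 0) + w *\<^sub>R (0, real d / real c))"
    unfolding convex_hull_3 by auto
  have ij: "real_of_int i = real t * (v * (real c / real d))" "real_of_int j = real t * (w * (real d / real c))"
    using uvw(5) by auto
  have i0: "0 \<le> real_of_int i" "0 \<le> real_of_int j" using ij uvw c d by auto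
  have "real d ^2 * real_of_int i + real c ^2 * real_of_int j = real t * real d * real c * (v + w)"
    unfolding ij using c d by (simp add: field_simps power2_eq_square)
  also have "\<dots> \<le> real t * real d * real c" using uvw by (simp add: mult_left_le)
  finally have "real_of_int ((int d)^2 * i + (int c)^2 * j) \<le> real_of_int (int t * int d * int c)" by simp
  then show "0 \<le> i \<and> 0 \<le> j \<and> (int d)^2 * i + (int c)^2 * j \<le> int t * int d * int c"
    using i0 by linarith
next
  assume h: "0 \<le> i \<and> 0 \<le> j \<and> (int d)^2 * i + (int c)^2 * j \<le> int t * int d * int c"
  have hr: "real d ^2 * real_of_int i + real c ^2 * real_of_int j \<le> real t * real d * real c"
  proof -
    have "real_of_int ((int d)^2 * i + (int c)^2 * j) \<le> real_of_int (int t * int d * int c)"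
      using h by linarith
    then show ?thesis by simp
  qed
  show "(real_of_int i, real_of_int j) \<in> (\<lambda>x. real t *\<^sub>R x) ` (convex hull {(0,0), (real c / real d, 0), (0, real d / real c)})"
  proof (cases "t = 0")
    case True
    have "real d ^2 * real_of_int i \<ge> 0" "real c ^2 * real_of_int j \<ge> 0" using h by auto
    moreover have "real d ^2 * real_of_int i + real c ^2 * real_of_int j \<le> 0" using hr True by simp
    ultimately have "real d ^2 * real_of_int i = 0" "real c ^2 * real_of_int j = 0" by linarith+
    then have "i = 0" "j = 0" using c d by auto
    moreover have "(0::real,0::real) \<in> convex hull {(0,0), (real c / real d, 0), (0, real d / real c)}"
      by (simp add: hull_inc)
    ultimately show ?thesis using True by (simp add: zero_prod_def[symmetric])
  next
    case False
    define v where "v = real_of_int i * real d / (real t * real c)"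
    define w where "w = real_of_int j * real c / (real t * real d)"
    have tp: "real t > 0" using False by simp
    have v0: "0 \<le> v" "0 \<le> w" unfolding v_def w_def using h by auto
    have "v + w = (real d ^2 * real_of_int i + real c ^2 * real_of_int j) / (real t * real d * real c)"
      unfolding v_def w_def using tp c d by (simp add: field_simps power2_eq_square)
    also have "\<dots> \<le> 1" using hr tp c d by (simp add: divide_le_eq_1)
    finally have vw: "v + w \<le> 1" .
    define u where "u = 1 - v - w"
    have "u *\<^sub>R (0,0) + v *\<^sub>R (real c / real d, 0) + w *\<^sub>R (0, real d / real c) \<in> convex hull {(0::real,0::real), (real c / real d, 0), (0, real d / real c)}"
    proof -
      have "0 \<le> u" "u + v + w = 1" using vw u_def by simp_all
      then show ?thesis unfolding convex_hull_3 using v0 by blast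
    qed
    moreover have "(real_of_int i, real_of_int j) = real t *\<^sub>R (u *\<^sub>R (0,0) + v *\<^sub>R (real c / real d, 0) + w *\<^sub>R (0, real d / real c))"
      unfolding v_def w_def using tp c d by (simp add: field_simps)
    ultimately show ?thesis by blast
  qed
qed



lemma I_eq:
  assumes c: "c > 0" and d: "d > 0"
  shows "card {p :: int \<times> int. (real_of_int (fst p), real_of_int (snd p)) \<in> (\<lambda>x. real t *\<^sub>R x) ` (convex hull {(0, 0), (real c / real d, 0), (0, real d / real c)})}
    = card (A (int d) (int c) (int t))"
proof -
  have "{p :: int \<times> int. (real_of_int (fst p), real_of_int (snd p)) \<in> (\<lambda>x. real t *\<^sub>R x) ` (convex hull {(0, 0), (real c / real d, 0), (0, real d / real c)})}
    = A (int d) (int c) (int t)"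
    unfolding A_def using tri_mem[OF c d, of _ _ t] by (auto simp: algebra_simps)
  then show ?thesis by simp
qed

lemma A_swap: "card (A a b t) = card (A b a t)"
proof -
  have "A a b t = prod.swap ` A b a t" unfolding A_def by (auto simp: algebra_simps image_iff)
  then show ?thesis by (simp add: card_image)
qed

lemma qp_A:
  assumes "a > 0" "b > 0" "m > 0" "m*b = a^2+1" "coprime m b"
  shows "quasi_period (nat a) (\<lambda>t. real (card (A a b (int t))))"
proof (rule qp_from_D2[where C = "real_of_int (a^2)"])
  show "nat a > 0" using assms by simp
  fix t
  have "int (card (A a b (int t + 2*a))) - 2 * int (card (A a b (int t + a))) + int (card (A a b (int t)))= a^2"
    using D2[OF assms, of "int t"] by simp
  moreover have "int (t + 2 * nat a) = int t + 2*a" "int (t + nat a) = int t + a" using assms by simp_all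
  ultimately have "int (card (A a b (int (t + 2 * nat a)))) - 2 * int (card (A a b (int (t + nat a)))) + int (card (A a b (int t))) = a^2"
    by simp
  then have "real_of_int (int (card (A a b (int (t + 2 * nat a)))) - 2 * int (card (A a b (int (t + nat a)))) + int (card (A a b (int t)))) = real_of_int (a^2)"
    by simp
  then show "real (card (A a b (int (t + 2 * nat a)))) - 2 * real (card (A a b (int (t + nat a)))) + real (card (A a b (int t))) = real_of_int (a^2)"
    by simp
qed

theorem theorem3p2:
  fixes k n :: nat
  assumes "k \<ge> 1" and "even n" and "n \<ge> 2"
  shows "quasi_period (F k n) (\<lambda>t. real (I k n t)) \<and>
         quasi_period (F k n) (\<lambda>t. real (I k (n + 1) t))"
proof -
  define p where "p = F k n"
  define q where "q = F k (n-1)"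
  define r where "r = F k (n+1)"
  have pos: "p > 0" "q > 0" "r > 0" unfolding p_def q_def r_def using F_pos assms by auto
  have cas0: "int (F k (Suc (Suc (n-1)))) * int (F k (n-1)) - int (F k (Suc (n-1)))^2 = (-1)^(Suc (n-1))"
    by (rule F_cassini)
  have "Suc (Suc (n-1)) = n+1" "Suc (n-1) = n" using assms by auto
  then have cas: "int r * int q = (int p)^2 + 1" using cas0 assms unfolding p_def q_def r_def by simp
  have cop: "coprime (int q) (int r)" using F_coprime2[OF assms(2,3), of k] unfolding q_def r_def by simp
  have I1: "I k n t = card (A (int p) (int q) (int t))" for t
    unfolding I_def triangle_def p_def[symmetric] q_def[symmetric] using I_eq[OF pos(2) pos(1)] by simp
  have I2: "I k (n+1) t = card (A (int p) (int r) (int t))" for t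
  proof -
    have "I k (n+1) t = card (A (int r) (int p) (int t))"
      unfolding I_def triangle_def using I_eq[OF pos(1) pos(3)] by (simp add: p_def r_def)
    then show ?thesis using A_swap by simp
  qed
  have q1: "quasi_period (nat (int p)) (\<lambda>t. real (card (A (int p) (int q) (int t))))"
    by (rule qp_A[where m = "int r"]) (use pos cas cop in \<open>auto simp: ac_simps coprime_commute\<close>)
  have q2: "quasi_period (nat (int p)) (\<lambda>t. real (card (A (int p) (int r) (int t))))"
    by (rule qp_A[where m = "int q"]) (use pos cas cop in \<open>auto simp: ac_simps coprime_commute\<close>)
  show ?thesis using q1 q2 unfolding p_def I1 I2 by simp
qed

end
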